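(* Let $n\ge 1$ and let $\rho_1$ be a density matrix on $n$ qubits (Hilbert space $H_1\cong(\mathbb{C}^2)^{\otimes n}$) at time $t_1$. Let $\mathcal{M}_{2|1}$ be a completely positive trace-preserving (CPTP) map from operators on $H_1$ to operators on $H_2\cong(\mathbb{C}^2)^{\otimes n}$, applied between times $t_1$ and $t_2$, with Choi–Jamiołkowski matrix $$M_{12}:=\sum_{i,j=0}^{2^n-1}\big(|i\rangle\langle j|\big)^T\otimes \mathcal{M}_{2|1}\big(|i\rangle\langle j|\big)\in\mathcal{B}(H_1\otimes H_2).$$ Let $R_{12}$ be the two-time $n$-qubit pseudo-density matrix obtained with coarse-grained measurements at $t_1$ and $t_2$ (as defined in the context). Then $$R_{12}=\tfrac12\big(M_{12}\,\rho+\rho\,M_{12}\big),\qquad \rho:=\rho_1\otimes \mathbb{1}_2 .$$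
   Context: Pauli matrices: $\sigma_0=\mathbb{1},\sigma_1,\sigma_2,\sigma_3$; an $n$-qubit Pauli matrix is an element $\tilde\sigma\in\{\sigma_0,\sigma_1,\sigma_2,\sigma_3\}^{\otimes n}$, indexed by $i\in\{0,\dots,4^n-1\}$. Coarse-grained measurement of $\tilde\sigma_{i}$ at time $t_\alpha$: the two-outcome projective measurement $\{P^\alpha_+=(\mathbb{1}+\tilde\sigma_{i})/2,\ P^\alpha_-=(\mathbb{1}-\tilde\sigma_{i})/2\}$ with outcomes $+1,-1$ respectively, and post-measurement (Lüders) update $\rho\mapsto P^\alpha_\pm\rho P^\alpha_\pm$ (unnormalized, its trace being the outcome probability). For a pair $(i_1,i_2)$, the experiment is: prepare $\rho_1$, perform the coarse-grained measurement of $\tilde\sigma_{i_1}$ at $t_1$, apply $\mathcal{M}_{2|1}$ to the post-measurement state, perform the coarse-grained measurement of $\tilde\sigma_{i_2}$ at $t_2$; $\langle\tilde\sigma_{i_1},\tilde\sigma_{i_2}\rangle$ denotes the expectation value of the product of the two $\pm1$ outcomes. The pseudo-density matrix is $$R_{12}=\frac{1}{2^{2n}}\sum_{i_1,i_2=0}^{4^n-1}\langle\tilde\sigma_{i_1},\tilde\sigma_{i_2}\rangle\,\tilde\sigma_{i_1}\otimes\tilde\sigma_{i_2}.$$ *)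

theory Defs
  imports Complex_Main "Jordan_Normal_Form.Matrix"
begin

(* Operators on n qubits are complex (2^n x 2^n) matrices (Jordan_Normal_Form). *)

definition mtrace :: "complex mat \<Rightarrow> complex" where
  "mtrace A = (\<Sum>i<dim_row A. A $$ (i,i))"

(* Kronecker (tensor) product; the first factor is the outer (most significant) index. *)
definition kron :: "complex mat \<Rightarrow> complex mat \<Rightarrow> complex mat" where
  "kron A B = mat (dim_row A * dim_row B) (dim_col A * dim_col B)
     (\<lambda>(i,j). A $$ (i div dim_row B, j div dim_col B) * B $$ (i mod dim_row B, j mod dim_col B))"

definition msum :: "nat \<Rightarrow> ('b \<Rightarrow> complex mat) \<Rightarrow> 'b set \<Rightarrow> complex mat" where
  "msum d f S = mat d d (\<lambda>(r,c). \<Sum>x\<in>S. f x $$ (r,c))"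

definition ket_bra :: "nat \<Rightarrow> nat \<Rightarrow> nat \<Rightarrow> complex mat" where
  "ket_bra d i j = mat d d (\<lambda>(r,c). if r = i \<and> c = j then 1 else 0)"

definition pauli :: "nat \<Rightarrow> complex mat" where
  "pauli k = (if k = 0 then mat_of_rows_list 2 [[1,0],[0,1]]
    else if k = 1 then mat_of_rows_list 2 [[0,1],[1,0]]
    else if k = 2 then mat_of_rows_list 2 [[0,-\<i>],[\<i>,0]]
    else mat_of_rows_list 2 [[1,0],[0,-1]])"

(* n-qubit Pauli matrix with index i in {0..4^n-1} (base-4 digits of i select the factors) *)
fun pauli_n :: "nat \<Rightarrow> nat \<Rightarrow> complex mat" where
  "pauli_n 0 i = 1\<^sub>m 1"
| "pauli_n (Suc n) i = kron (pauli (i mod 4)) (pauli_n n (i div 4))"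

definition psd :: "nat \<Rightarrow> complex mat \<Rightarrow> bool" where
  "psd d A \<longleftrightarrow> A \<in> carrier_mat d d \<and>
     (\<forall>v :: nat \<Rightarrow> complex. let q = (\<Sum>i<d. \<Sum>j<d. cnj (v i) * A $$ (i,j) * v j)
        in q \<in> \<real> \<and> Re q \<ge> 0)"

definition density_matrix :: "nat \<Rightarrow> complex mat \<Rightarrow> bool" where
  "density_matrix d \<rho> \<longleftrightarrow> psd d \<rho> \<and> mtrace \<rho> = 1"

(* (id_k \<otimes> \<Phi>) applied to a (k*d) x (k*d) matrix, blockwise *)
definition ext_map :: "nat \<Rightarrow> nat \<Rightarrow> (complex mat \<Rightarrow> complex mat) \<Rightarrow> complex mat \<Rightarrow> complex mat" where
  "ext_map k d \<Phi> X = mat (k*d) (k*d) (\<lambda>(r,c).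
      \<Phi> (mat d d (\<lambda>(p,q). X $$ ((r div d) * d + p, (c div d) * d + q))) $$ (r mod d, c mod d))"

definition linear_map_on :: "nat \<Rightarrow> (complex mat \<Rightarrow> complex mat) \<Rightarrow> bool" where
  "linear_map_on d \<Phi> \<longleftrightarrow>
     (\<forall>A \<in> carrier_mat d d. \<Phi> A \<in> carrier_mat d d) \<and>
     (\<forall>A \<in> carrier_mat d d. \<forall>B \<in> carrier_mat d d. \<Phi> (A + B) = \<Phi> A + \<Phi> B) \<and>
     (\<forall>A \<in> carrier_mat d d. \<forall>c. \<Phi> (c \<cdot>\<^sub>m A) = c \<cdot>\<^sub>m \<Phi> A)"

definition CPTP :: "nat \<Rightarrow> (complex mat \<Rightarrow> complex mat) \<Rightarrow> bool" where
  "CPTP d \<Phi> \<longleftrightarrow> linear_map_on d \<Phi> \<and>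
     (\<forall>A \<in> carrier_mat d d. mtrace (\<Phi> A) = mtrace A) \<and>
     (\<forall>k X. psd (k*d) X \<longrightarrow> psd (k*d) (ext_map k d \<Phi> X))"

definition choi :: "nat \<Rightarrow> (complex mat \<Rightarrow> complex mat) \<Rightarrow> complex mat" where
  "choi d \<Phi> = msum (d*d) (\<lambda>(i,j). kron (transpose_mat (ket_bra d i j)) (\<Phi> (ket_bra d i j)))
                 ({..<d} \<times> {..<d})"

(* coarse-grained projectors P_{+/-} = (1 +/- sigma)/2, outcome a \<in> {1,-1} *)
definition proj :: "nat \<Rightarrow> nat \<Rightarrow> int \<Rightarrow> complex mat" where
  "proj n i a = (1/2 :: complex) \<cdot>\<^sub>m (1\<^sub>m (2^n) + of_int a \<cdot>\<^sub>m pauli_n n i)"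

(* joint probability of outcomes a, b (Lueders rule, then channel, then second measurement) *)
definition joint_prob :: "nat \<Rightarrow> complex mat \<Rightarrow> (complex mat \<Rightarrow> complex mat) \<Rightarrow> nat \<Rightarrow> nat \<Rightarrow> int \<Rightarrow> int \<Rightarrow> complex" where
  "joint_prob n \<rho> \<Phi> i1 i2 a b =
     mtrace (proj n i2 b * \<Phi> (proj n i1 a * \<rho> * proj n i1 a) * proj n i2 b)"

definition corr :: "nat \<Rightarrow> complex mat \<Rightarrow> (complex mat \<Rightarrow> complex mat) \<Rightarrow> nat \<Rightarrow> nat \<Rightarrow> complex" where
  "corr n \<rho> \<Phi> i1 i2 = (\<Sum>a\<in>{1,-1::int}. \<Sum>b\<in>{1,-1::int}. of_int (a*b) * joint_prob n \<rho> \<Phi> i1 i2 a b)"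

definition pdm :: "nat \<Rightarrow> complex mat \<Rightarrow> (complex mat \<Rightarrow> complex mat) \<Rightarrow> complex mat" where
  "pdm n \<rho> \<Phi> = (1 / 2^(2*n) :: complex) \<cdot>\<^sub>m
     msum (2^n * 2^n) (\<lambda>(i1,i2). corr n \<rho> \<Phi> i1 i2 \<cdot>\<^sub>m kron (pauli_n n i1) (pauli_n n i2))
       ({..<4^n} \<times> {..<4^n})"

end

theory Submission
  imports Defs
begin

lemma sum_split_mult:
  fixes f :: "nat \<Rightarrow> 'a::comm_monoid_add"
  shows "(\<Sum>i<m*d. f i) = (\<Sum>q<m. \<Sum>r<d. f (q*d + r))"
proof -
  have bij: "bij_betw (\<lambda>(q,r). q*d + r) ({..<m} \<times> {..<d}) {..<m*d}"
  proof (rule bij_betwI[where g="\<lambda>i. (i div d, i mod d)"])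
    show "(\<lambda>(q, r). q * d + r) \<in> {..<m} \<times> {..<d} \<rightarrow> {..<m * d}"
    proof
      fix x assume "x \<in> {..<m} \<times> {..<d}"
      then obtain q r where x: "x = (q,r)" "q < m" "r < d" by auto
      have "q*d + r < q*d + d" using x by simp
      also have "\<dots> = Suc q * d" by simp
      also have "\<dots> \<le> m*d" using x by (intro mult_right_mono) auto
      finally show "(\<lambda>(q, r). q * d + r) x \<in> {..<m*d}" using x by simp
    qed
    show "(\<lambda>i. (i div d, i mod d)) \<in> {..<m * d} \<rightarrow> {..<m} \<times> {..<d}"
    proof
      fix i assume i: "i \<in> {..<m*d}"
      then have d: "d > 0" by (cases "d = 0") auto
      from i have "i div d < m" by (simp add: less_mult_imp_div_less)
      then show "(i div d, i mod d) \<in> {..<m} \<times> {..<d}" using d by simp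
    qed
    show "\<And>x. x \<in> {..<m} \<times> {..<d} \<Longrightarrow> (case (case x of (q, r) \<Rightarrow> q * d + r) of i \<Rightarrow> (i div d, i mod d)) = x"
      by auto
    show "\<And>y. y \<in> {..<m * d} \<Longrightarrow> (case (y div d, y mod d) of (q, r) \<Rightarrow> q * d + r) = y"
      by simp
  qed
  have "(\<Sum>i<m*d. f i) = (\<Sum>x\<in>{..<m} \<times> {..<d}. f ((\<lambda>(q,r). q*d + r) x))"
    using sum.reindex_bij_betw[OF bij, of f] by simp
  also have "\<dots> = (\<Sum>q<m. \<Sum>r<d. f (q*d + r))"
    by (simp add: sum.cartesian_product split_def)
  finally show ?thesis .
qed

lemma pauli_carrier: "pauli k \<in> carrier_mat 2 2"
  unfolding pauli_def mat_of_rows_list_def carrier_mat_def by auto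

lemma kron_carrier: "A \<in> carrier_mat a b \<Longrightarrow> B \<in> carrier_mat c d \<Longrightarrow> kron A B \<in> carrier_mat (a*c) (b*d)"
  by (simp add: kron_def)

lemma index_kron: "A \<in> carrier_mat a b \<Longrightarrow> B \<in> carrier_mat c d \<Longrightarrow> i < a*c \<Longrightarrow> j < b*d \<Longrightarrow>
   kron A B $$ (i,j) = A $$ (i div c, j div d) * B $$ (i mod c, j mod d)"
  by (simp add: kron_def)

lemma pauli_n_carrier: "pauli_n n i \<in> carrier_mat (2^n) (2^n)"
  proof (induction n arbitrary: i)
  case (Suc n)
  show ?case using kron_carrier[OF pauli_carrier Suc.IH] by simp
qed simp

lemma pauli_complete1:
  assumes "r < 2" "c < 2" "r' < 2" "c' < 2"
  shows "(\<Sum>k<4. pauli k $$ (r,c) * pauli k $$ (c',r')) = (if r = r' \<and> c = c' then 2 else 0)"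
proof -
  have "r \<in> {0,1}" "c \<in> {0,1}" "r' \<in> {0,1}" "c' \<in> {0,1}" using assms by auto
  then show ?thesis
    by (auto simp: pauli_def numeral_eq_Suc lessThan_Suc mat_of_rows_list_def)
qed

lemma pauli_complete:
  assumes "r < 2^n" "c < 2^n" "r' < 2^n" "c' < 2^n"
  shows "(\<Sum>i<4^n. pauli_n n i $$ (r,c) * pauli_n n i $$ (c',r')) = (if r = r' \<and> c = c' then 2^n else 0)"
  using assms
proof (induction n arbitrary: r c r' c')
  case 0
  then show ?case by simp
next
  case (Suc n)
  define N where "N = (2::nat)^n"
  have N: "N > 0" by (simp add: N_def)
  have lt: "x < 2 * N" if "x < 2^Suc n" for x using that by (simp add: N_def)
  have ent: "pauli_n (Suc n) (q*4+k) $$ (x,y) = pauli k $$ (x div N, y div N) * pauli_n n q $$ (x mod N, y mod N)"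
    if "k < 4" "x < 2*N" "y < 2*N" for q k x y
  proof -
    have "pauli_n (Suc n) (q*4+k) = kron (pauli k) (pauli_n n q)" using that by simp
    then show ?thesis using that
      by (simp add: N_def index_kron[OF pauli_carrier pauli_n_carrier])
  qed
  have ent': "kron (pauli k) (pauli_n n q) $$ (x,y) = pauli k $$ (x div N, y div N) * pauli_n n q $$ (x mod N, y mod N)"
    if "x < 2*2^n" "y < 2*2^n" for q k x y
    using that by (simp add: N_def index_kron[OF pauli_carrier pauli_n_carrier])
  have "(\<Sum>i<4^Suc n. pauli_n (Suc n) i $$ (r,c) * pauli_n (Suc n) i $$ (c',r'))
      = (\<Sum>q<4^n. \<Sum>k<4. pauli_n (Suc n) (q*4+k) $$ (r,c) * pauli_n (Suc n) (q*4+k) $$ (c',r'))"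
  proof -
    have "(4::nat)^Suc n = 4^n * 4" by simp
    then show ?thesis by (simp only: sum_split_mult)
  qed
  also have "\<dots> = (\<Sum>q<4^n. \<Sum>k<4. (pauli k $$ (r div N, c div N) * pauli k $$ (c' div N, r' div N)) *
        (pauli_n n q $$ (r mod N, c mod N) * pauli_n n q $$ (c' mod N, r' mod N)))"
    using Suc.prems by (intro sum.cong refl) (simp add: ent')
  also have "\<dots> = (\<Sum>k<4. pauli k $$ (r div N, c div N) * pauli k $$ (c' div N, r' div N)) *
        (\<Sum>q<4^n. pauli_n n q $$ (r mod N, c mod N) * pauli_n n q $$ (c' mod N, r' mod N))"
    unfolding sum_product by (rule sum.swap)
  also have "\<dots> = (if r div N = r' div N \<and> c div N = c' div N then 2 else 0) *
        (if r mod N = r' mod N \<and> c mod N = c' mod N then 2^n else 0)"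
  proof -
    have d: "x div N < 2" if "x < 2^Suc n" for x using lt[OF that] N by (simp add: less_mult_imp_div_less)
    have m: "x mod N < 2^n" for x using N by (simp add: N_def)
    show ?thesis using Suc.prems
      by (simp add: pauli_complete1 d Suc.IH m)
  qed
  also have "\<dots> = (if r = r' \<and> c = c' then 2^Suc n else 0)"
  proof -
    have e: "x = y \<longleftrightarrow> x div N = y div N \<and> x mod N = y mod N" for x y
      by (metis div_mult_mod_eq)
    show ?thesis unfolding e[of r r'] e[of c c'] by simp
  qed
  finally show ?case .
qed

lemma ket_bra_carrier: "ket_bra d i j \<in> carrier_mat d d"
  by (simp add: ket_bra_def)

lemma lin_entry:
  assumes lin: "linear_map_on d \<Phi>" and X: "X \<in> carrier_mat d d" and rc: "r < d" "c < d"
  shows "\<Phi> X $$ (r,c) = (\<Sum>x<d. \<Sum>y<d. X $$ (x,y) * \<Phi> (ket_bra d x y) $$ (r,c))"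
proof -
  have car: "\<And>A. A \<in> carrier_mat d d \<Longrightarrow> \<Phi> A \<in> carrier_mat d d"
   and add: "\<And>A B. A \<in> carrier_mat d d \<Longrightarrow> B \<in> carrier_mat d d \<Longrightarrow> \<Phi> (A + B) = \<Phi> A + \<Phi> B"
   and sm: "\<And>A k. A \<in> carrier_mat d d \<Longrightarrow> \<Phi> (k \<cdot>\<^sub>m A) = k \<cdot>\<^sub>m \<Phi> A"
    using lin unfolding linear_map_on_def by auto
  define part where "part S = mat d d (\<lambda>(a,b). if (a,b) \<in> S then X $$ (a,b) else 0)" for S
  have pc: "part S \<in> carrier_mat d d" for S by (simp add: part_def)
  have main: "\<Phi> (part S) $$ (r,c) = (\<Sum>p\<in>S. X $$ p * \<Phi> (ket_bra d (fst p) (snd p)) $$ (r,c))"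
    if "finite S" "S \<subseteq> {..<d} \<times> {..<d}" for S
    using that
  proof (induction S rule: finite_induct)
    case empty
    have z: "part {} = 0 \<cdot>\<^sub>m 1\<^sub>m d" by (intro eq_matI) (simp_all add: part_def)
    have "\<Phi> (part {}) = 0 \<cdot>\<^sub>m \<Phi> (1\<^sub>m d)" unfolding z by (rule sm) simp
    then show ?case using car[of "1\<^sub>m d"] rc by simp
  next
    case (insert p S)
    obtain a b where p: "p = (a,b)" by (cases p)
    have ab: "a < d" "b < d" using insert.prems p by auto
    have eq: "part (insert p S) = part S + X $$ p \<cdot>\<^sub>m ket_bra d a b"
    proof (rule eq_matI)
      fix i j assume ij: "i < dim_row (part S + X $$ p \<cdot>\<^sub>m ket_bra d a b)" "j < dim_col (part S + X $$ p \<cdot>\<^sub>m ket_bra d a b)"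
      then have ij': "i < d" "j < d" by (simp_all add: part_def ket_bra_def)
      show "part (insert p S) $$ (i, j) = (part S + X $$ p \<cdot>\<^sub>m ket_bra d a b) $$ (i, j)"
        using ij' insert.hyps(2) unfolding p by (simp add: part_def ket_bra_def)
    qed (simp_all add: part_def ket_bra_def)
    have "\<Phi> (part (insert p S)) = \<Phi> (part S) + X $$ p \<cdot>\<^sub>m \<Phi> (ket_bra d a b)"
      unfolding eq by (simp add: add[OF pc] ket_bra_carrier sm)
    then have "\<Phi> (part (insert p S)) $$ (r,c) = \<Phi> (part S) $$ (r,c) + X $$ p * \<Phi> (ket_bra d a b) $$ (r,c)"
      using car[OF pc[of S]] car[OF ket_bra_carrier[of d a b]] rc by simp
    then show ?case using insert p by simp
  qed
  have "part ({..<d} \<times> {..<d}) = X" using X by (intro eq_matI) (auto simp: part_def)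
  then have "\<Phi> X $$ (r,c) = (\<Sum>p\<in>{..<d} \<times> {..<d}. X $$ p * \<Phi> (ket_bra d (fst p) (snd p)) $$ (r,c))"
    using main[of "{..<d} \<times> {..<d}"] by simp
  also have "\<dots> = (\<Sum>x<d. \<Sum>y<d. X $$ (x,y) * \<Phi> (ket_bra d x y) $$ (r,c))"
    by (simp add: sum.cartesian_product split_def)
  finally show ?thesis .
qed

lemma proj_expand:
  fixes A X :: "complex mat" and c :: complex
  assumes A: "A \<in> carrier_mat d d" and X: "X \<in> carrier_mat d d"
  defines "Q \<equiv> 1\<^sub>m d + c \<cdot>\<^sub>m A"
  shows "((1/2) \<cdot>\<^sub>m Q) * X * ((1/2) \<cdot>\<^sub>m Q) =
     (1/4) \<cdot>\<^sub>m (X + c \<cdot>\<^sub>m (X*A) + (c \<cdot>\<^sub>m (A*X) + (c*c) \<cdot>\<^sub>m (A*X*A)))"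
proof -
  have Qc: "Q \<in> carrier_mat d d" using A by (simp add: Q_def)
  have 1: "((1/2) \<cdot>\<^sub>m Q) * X * ((1/2) \<cdot>\<^sub>m Q) = (1/2) \<cdot>\<^sub>m ((1/2) \<cdot>\<^sub>m (Q*X*Q))"
  proof -
    have a: "((1/2) \<cdot>\<^sub>m Q) * X = (1/2) \<cdot>\<^sub>m (Q*X)" by (rule mult_smult_assoc_mat[OF Qc X])
    have b: "((1/2) \<cdot>\<^sub>m (Q*X)) * ((1/2) \<cdot>\<^sub>m Q) = (1/2) \<cdot>\<^sub>m ((Q*X) * ((1/2) \<cdot>\<^sub>m Q))"
      by (rule mult_smult_assoc_mat) (use Qc X in auto)
    have c: "(Q*X) * ((1/2) \<cdot>\<^sub>m Q) = (1/2) \<cdot>\<^sub>m ((Q*X) * Q)"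
      by (rule mult_smult_distrib) (use Qc X in auto)
    show ?thesis by (simp only: a b c)
  qed
  have 2: "Q * X = X + c \<cdot>\<^sub>m (A*X)"
  proof -
    have "Q * X = 1\<^sub>m d * X + (c \<cdot>\<^sub>m A) * X" unfolding Q_def
      by (rule add_mult_distrib_mat) (use A X in auto)
    also have "\<dots> = X + c \<cdot>\<^sub>m (A*X)" using A X by (simp add: mult_smult_assoc_mat)
    finally show ?thesis .
  qed
  have 3: "(X + c \<cdot>\<^sub>m (A*X)) * Q = X + c \<cdot>\<^sub>m (X*A) + (c \<cdot>\<^sub>m (A*X) + (c*c) \<cdot>\<^sub>m (A*X*A))"
  proof -
    have "(X + c \<cdot>\<^sub>m (A*X)) * Q = X * Q + (c \<cdot>\<^sub>m (A*X)) * Q"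
      using A X Qc by (simp add: add_mult_distrib_mat)
    also have "X * Q = X + c \<cdot>\<^sub>m (X*A)"
    proof -
      have "X * Q = X * 1\<^sub>m d + X * (c \<cdot>\<^sub>m A)" unfolding Q_def
        by (rule mult_add_distrib_mat) (use A X in auto)
      also have "\<dots> = X + c \<cdot>\<^sub>m (X*A)" using A X by (simp add: mult_smult_distrib)
      finally show ?thesis .
    qed
    also have "(c \<cdot>\<^sub>m (A*X)) * Q = c \<cdot>\<^sub>m (A*X) + (c*c) \<cdot>\<^sub>m (A*X*A)"
    proof -
      have "(c \<cdot>\<^sub>m (A*X)) * Q = c \<cdot>\<^sub>m ((A*X) * Q)" by (rule mult_smult_assoc_mat) (use A X Qc in auto)
      also have "(A*X) * Q = A*X + c \<cdot>\<^sub>m (A*X*A)"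
      proof -
        have "(A*X) * Q = (A*X) * 1\<^sub>m d + (A*X) * (c \<cdot>\<^sub>m A)" unfolding Q_def
          by (rule mult_add_distrib_mat) (use A X in auto)
        also have "\<dots> = A*X + c \<cdot>\<^sub>m (A*X*A)" using A X by (simp add: mult_smult_distrib[of "A*X" d d A d])
        finally show ?thesis .
      qed
      finally show ?thesis using A X
        by (intro eq_matI) (auto simp: algebra_simps)
    qed
    finally show ?thesis .
  qed
  have 4: "Q*X*Q = X + c \<cdot>\<^sub>m (X*A) + (c \<cdot>\<^sub>m (A*X) + (c*c) \<cdot>\<^sub>m (A*X*A))"
    by (simp only: 2 3)
  show ?thesis unfolding 1 4 using Qc X A
    by (intro eq_matI) auto
qed

lemma mult_entry:
  fixes A B :: "complex mat"
  assumes "A \<in> carrier_mat d d" "B \<in> carrier_mat d d" "x < d" "y < d"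
  shows "(A*B) $$ (x,y) = (\<Sum>k<d. A $$ (x,k) * B $$ (k,y))"
  using assms by (simp add: scalar_prod_def atLeast0LessThan)

lemma pm_entry:
  fixes A X :: "complex mat"
  assumes A: "A \<in> carrier_mat d d" and X: "X \<in> carrier_mat d d" and xy: "x < d" "y < d"
  shows "(\<Sum>a\<in>{1,-1::int}. of_int a * (((1/2) \<cdot>\<^sub>m (1\<^sub>m d + of_int a \<cdot>\<^sub>m A)) * X * ((1/2) \<cdot>\<^sub>m (1\<^sub>m d + of_int a \<cdot>\<^sub>m A))) $$ (x,y))
     = (1/2) * ((A*X) $$ (x,y) + (X*A) $$ (x,y))"
proof -
  have e: "(((1/2) \<cdot>\<^sub>m (1\<^sub>m d + c \<cdot>\<^sub>m A)) * X * ((1/2) \<cdot>\<^sub>m (1\<^sub>m d + c \<cdot>\<^sub>m A))) $$ (x,y)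
     = (1/4) * (X $$ (x,y) + c * (X*A) $$ (x,y) + (c * (A*X) $$ (x,y) + (c*c) * (A*X*A) $$ (x,y)))" for c
    unfolding proj_expand[OF A X] using A X xy by simp
  show ?thesis by (simp add: e algebra_simps)
qed

lemma pm_trace:
  fixes A X :: "complex mat"
  assumes A: "A \<in> carrier_mat d d" and X: "X \<in> carrier_mat d d"
  shows "(\<Sum>b\<in>{1,-1::int}. of_int b * mtrace (((1/2) \<cdot>\<^sub>m (1\<^sub>m d + of_int b \<cdot>\<^sub>m A)) * X * ((1/2) \<cdot>\<^sub>m (1\<^sub>m d + of_int b \<cdot>\<^sub>m A))))
     = (\<Sum>p<d. \<Sum>q<d. A $$ (p,q) * X $$ (q,p))"
proof -
  define M where "M b = ((1/2) \<cdot>\<^sub>m (1\<^sub>m d + of_int b \<cdot>\<^sub>m A)) * X * ((1/2) \<cdot>\<^sub>m (1\<^sub>m d + of_int b \<cdot>\<^sub>m A))" for b :: int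
  have dimM: "dim_row (M b) = d" for b unfolding M_def using A by simp
  have "(\<Sum>b\<in>{1,-1::int}. of_int b * mtrace (M b)) = (\<Sum>b\<in>{1,-1::int}. \<Sum>i<d. of_int b * M b $$ (i,i))"
    by (simp only: mtrace_def dimM sum_distrib_left)
  also have "\<dots> = (\<Sum>i<d. \<Sum>b\<in>{1,-1::int}. of_int b * M b $$ (i,i))"
    by (rule sum.swap)
  finally have "(\<Sum>b\<in>{1,-1::int}. of_int b * mtrace (((1/2) \<cdot>\<^sub>m (1\<^sub>m d + of_int b \<cdot>\<^sub>m A)) * X * ((1/2) \<cdot>\<^sub>m (1\<^sub>m d + of_int b \<cdot>\<^sub>m A))))
    = (\<Sum>i<d. \<Sum>b\<in>{1,-1::int}. of_int b * (((1/2) \<cdot>\<^sub>m (1\<^sub>m d + of_int b \<cdot>\<^sub>m A)) * X * ((1/2) \<cdot>\<^sub>m (1\<^sub>m d + of_int b \<cdot>\<^sub>m A))) $$ (i,i))"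
    unfolding M_def .
  also have "\<dots> = (\<Sum>i<d. (1/2) * ((A*X) $$ (i,i) + (X*A) $$ (i,i)))"
    by (rule sum.cong[OF refl], rule pm_entry[OF A X]) auto
  also have "\<dots> = (1/2) * ((\<Sum>i<d. \<Sum>k<d. A $$ (i,k) * X $$ (k,i)) + (\<Sum>i<d. \<Sum>k<d. X $$ (i,k) * A $$ (k,i)))"
  proof -
    have "(\<Sum>i<d. (1/2) * ((A*X) $$ (i,i) + (X*A) $$ (i,i))) =
      (\<Sum>i<d. (1/2) * ((\<Sum>k<d. A $$ (i,k) * X $$ (k,i)) + (\<Sum>k<d. X $$ (i,k) * A $$ (k,i))))"
      by (intro sum.cong refl) (simp add: mult_entry[OF A X] mult_entry[OF X A] del: index_mult_mat)
    also have "\<dots> = (1/2) * ((\<Sum>i<d. \<Sum>k<d. A $$ (i,k) * X $$ (k,i)) + (\<Sum>i<d. \<Sum>k<d. X $$ (i,k) * A $$ (k,i)))"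
      by (simp only: sum_distrib_left[symmetric] sum.distrib)
    finally show ?thesis .
  qed
  also have "(\<Sum>i<d. \<Sum>k<d. X $$ (i,k) * A $$ (k,i)) = (\<Sum>i<d. \<Sum>k<d. A $$ (i,k) * X $$ (k,i))"
    by (subst sum.swap) (simp add: mult.commute)
  finally show ?thesis by simp
qed

lemma pauli_contract:
  assumes rc: "r < 2^n" "c < 2^n"
  fixes H :: "nat \<Rightarrow> nat \<Rightarrow> complex"
  shows "(\<Sum>i<4^n. pauli_n n i $$ (r,c) * (\<Sum>p<2^n. \<Sum>q<2^n. pauli_n n i $$ (p,q) * H q p)) = 2^n * H r c"
proof -
  have "(\<Sum>i<4^n. pauli_n n i $$ (r,c) * (\<Sum>p<2^n. \<Sum>q<2^n. pauli_n n i $$ (p,q) * H q p))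
      = (\<Sum>p<2^n. \<Sum>q<2^n. H q p * (\<Sum>i<4^n. pauli_n n i $$ (r,c) * pauli_n n i $$ (p,q)))"
  proof -
    have "(\<Sum>i<4^n. pauli_n n i $$ (r,c) * (\<Sum>p<2^n. \<Sum>q<2^n. pauli_n n i $$ (p,q) * H q p))
      = (\<Sum>i<4^n. \<Sum>p<2^n. \<Sum>q<2^n. H q p * (pauli_n n i $$ (r,c) * pauli_n n i $$ (p,q)))"
      by (simp add: sum_distrib_left mult.commute mult.left_commute)
    also have "\<dots> = (\<Sum>p<2^n. \<Sum>i<4^n. \<Sum>q<2^n. H q p * (pauli_n n i $$ (r,c) * pauli_n n i $$ (p,q)))"
      by (rule sum.swap)
    also have "\<dots> = (\<Sum>p<2^n. \<Sum>q<2^n. \<Sum>i<4^n. H q p * (pauli_n n i $$ (r,c) * pauli_n n i $$ (p,q)))"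
      by (rule sum.cong[OF refl], rule sum.swap)
    finally show ?thesis by (simp add: sum_distrib_left)
  qed
  also have "\<dots> = (\<Sum>p<2^n. if p = c then (\<Sum>q<2^n. if q = r then 2^n * H r c else 0) else 0)"
  proof (intro sum.cong refl)
    fix p assume pq: "p \<in> {..<(2::nat)^n}"
    have "H q p * (\<Sum>i<4^n. pauli_n n i $$ (r,c) * pauli_n n i $$ (p,q)) = (if p = c then (if q = r then 2^n * H r c else 0) else 0)"
      if "q \<in> {..<2^n}" for q
      using rc pq that pauli_complete[of r n c q p] by auto
    note pt = this
    show "(\<Sum>q<2^n. H q p * (\<Sum>i<4^n. pauli_n n i $$ (r,c) * pauli_n n i $$ (p,q))) =
       (if p = c then (\<Sum>q<2^n. if q = r then 2^n * H r c else 0) else 0)"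
    proof -
      have "(\<Sum>q<2^n. H q p * (\<Sum>i<4^n. pauli_n n i $$ (r,c) * pauli_n n i $$ (p,q))) =
        (\<Sum>q<(2::nat)^n. if p = c then (if q = r then 2^n * H r c else 0) else 0)"
        by (rule sum.cong[OF refl]) (rule pt)
      then show ?thesis by simp
    qed
  qed
  also have "\<dots> = 2^n * H r c"
    using rc by simp
  finally show ?thesis .
qed

lemma corr_formula:
  fixes \<Phi> :: "complex mat \<Rightarrow> complex mat"
  assumes lin: "linear_map_on (2^n) \<Phi>" and rho: "\<rho> \<in> carrier_mat (2^n) (2^n)"
  shows "corr n \<rho> \<Phi> i1 i2 = (\<Sum>p<2^n. \<Sum>q<2^n. pauli_n n i2 $$ (p,q) *
     (\<Sum>x<2^n. \<Sum>y<2^n. ((1/2) * ((pauli_n n i1 * \<rho>) $$ (x,y) + (\<rho> * pauli_n n i1) $$ (x,y)))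
         * \<Phi> (ket_bra (2^n) x y) $$ (q,p)))"
proof -
  define d where "d = (2::nat)^n"
  define Y where "Y a = proj n i1 a * \<rho> * proj n i1 a" for a
  have car: "\<And>A. A \<in> carrier_mat d d \<Longrightarrow> \<Phi> A \<in> carrier_mat d d"
    using lin unfolding linear_map_on_def d_def by auto
  have projc: "proj n i a \<in> carrier_mat d d" for i a
    using pauli_n_carrier by (simp add: proj_def d_def)
  have Yc: "Y a \<in> carrier_mat d d" for a unfolding Y_def
    by (rule mult_carrier_mat[OF mult_carrier_mat[OF projc]]) (use rho d_def projc in auto)
  have "corr n \<rho> \<Phi> i1 i2 = (\<Sum>a\<in>{1,-1::int}. of_int a * (\<Sum>b\<in>{1,-1::int}. of_int b *
      mtrace (proj n i2 b * \<Phi> (Y a) * proj n i2 b)))"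
    unfolding corr_def joint_prob_def Y_def by (simp add: algebra_simps)
  also have "\<dots> = (\<Sum>a\<in>{1,-1::int}. of_int a * (\<Sum>p<d. \<Sum>q<d. pauli_n n i2 $$ (p,q) * \<Phi> (Y a) $$ (q,p)))"
    using pm_trace[OF _ car[OF Yc], of "pauli_n n i2"] pauli_n_carrier
    by (simp add: proj_def d_def)
  also have "\<dots> = (\<Sum>p<d. \<Sum>q<d. pauli_n n i2 $$ (p,q) * (\<Sum>a\<in>{1,-1::int}. of_int a * \<Phi> (Y a) $$ (q,p)))"
    by (simp add: sum_distrib_left sum_subtractf sum_negf right_diff_distrib)
  also have "\<dots> = (\<Sum>p<d. \<Sum>q<d. pauli_n n i2 $$ (p,q) *
      (\<Sum>x<d. \<Sum>y<d. (\<Sum>a\<in>{1,-1::int}. of_int a * Y a $$ (x,y)) * \<Phi> (ket_bra d x y) $$ (q,p)))"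
  proof (intro sum.cong refl arg_cong2[where f="(*)"])
    fix p q assume "p \<in> {..<d}" "q \<in> {..<d}"
    then show "(\<Sum>a\<in>{1,-1::int}. of_int a * \<Phi> (Y a) $$ (q,p)) =
      (\<Sum>x<d. \<Sum>y<d. (\<Sum>a\<in>{1,-1::int}. of_int a * Y a $$ (x,y)) * \<Phi> (ket_bra d x y) $$ (q,p))"
      using lin_entry[OF lin[folded d_def] Yc]
      by (simp add: sum_distrib_left sum_subtractf sum_negf left_diff_distrib)
  qed
  also have "\<dots> = (\<Sum>p<d. \<Sum>q<d. pauli_n n i2 $$ (p,q) *
     (\<Sum>x<d. \<Sum>y<d. ((1/2) * ((pauli_n n i1 * \<rho>) $$ (x,y) + (\<rho> * pauli_n n i1) $$ (x,y)))
         * \<Phi> (ket_bra d x y) $$ (q,p)))"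
  proof (intro sum.cong refl arg_cong2[where f="(*)"])
    fix x y assume "x \<in> {..<d}" "y \<in> {..<d}"
    then show "(\<Sum>a\<in>{1,-1::int}. of_int a * Y a $$ (x,y)) =
      (1/2) * ((pauli_n n i1 * \<rho>) $$ (x,y) + (\<rho> * pauli_n n i1) $$ (x,y))"
      unfolding Y_def proj_def using pm_entry[OF pauli_n_carrier rho, of x y i1] by (simp add: d_def)
  qed
  finally show ?thesis unfolding d_def .
qed

lemma choi_entry:
  assumes lin: "linear_map_on d \<Phi>" and R: "R < d*d" and C: "C < d*d"
  shows "choi d \<Phi> $$ (R,C) = \<Phi> (ket_bra d (C div d) (R div d)) $$ (R mod d, C mod d)"
proof -
  have car: "\<And>A. A \<in> carrier_mat d d \<Longrightarrow> \<Phi> A \<in> carrier_mat d d"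
    using lin unfolding linear_map_on_def by auto
  have d: "d > 0" using R by (cases d) auto
  have R1: "R div d < d" and C1: "C div d < d" using R C by (auto simp: less_mult_imp_div_less)
  have "choi d \<Phi> $$ (R,C) = (\<Sum>p\<in>{..<d} \<times> {..<d}. transpose_mat (ket_bra d (fst p) (snd p)) $$ (R div d, C div d) *
          \<Phi> (ket_bra d (fst p) (snd p)) $$ (R mod d, C mod d))"
    unfolding choi_def msum_def using R C
    by (auto simp: split_def intro!: sum.cong index_kron[where a=d and b=d and c=d and d=d] car ket_bra_carrier)
  also have "\<dots> = (\<Sum>i<d. \<Sum>j<d. transpose_mat (ket_bra d i j) $$ (R div d, C div d) *
          \<Phi> (ket_bra d i j) $$ (R mod d, C mod d))"
    by (simp add: sum.cartesian_product split_def)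
  also have "\<dots> = (\<Sum>i<d. if i = C div d then (\<Sum>j<d. if j = R div d then \<Phi> (ket_bra d i j) $$ (R mod d, C mod d) else 0) else 0)"
  proof -
    have tr: "transpose_mat (ket_bra d i j) $$ (R div d, C div d) = (if i = C div d \<and> j = R div d then 1 else 0)"
      if "i<d" "j<d" for i j using R1 C1 that by (simp add: ket_bra_def)
    have m1: "(if P then 1 else 0) * (x::complex) = (if P then x else 0)" for P x by simp
    show ?thesis by (intro sum.cong refl) (auto simp: tr m1 cong: if_cong)
  qed
  also have "\<dots> = \<Phi> (ket_bra d (C div d) (R div d)) $$ (R mod d, C mod d)"
    using R1 C1 by simp
  finally show ?thesis .
qed

lemma kron_id_entry:
  assumes rho: "\<rho> \<in> carrier_mat d d" and R: "R < d*d" and C: "C < d*d"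
  shows "kron \<rho> (1\<^sub>m d) $$ (R,C) = \<rho> $$ (R div d, C div d) * (if R mod d = C mod d then 1 else 0)"
proof -
  have d: "d > 0" using R by (cases d) auto
  show ?thesis using index_kron[OF rho one_carrier_mat R C] d by simp
qed

lemma pauli_G:
  fixes \<rho> :: "complex mat"
  assumes rho: "\<rho> \<in> carrier_mat (2^n) (2^n)" and lt: "x < 2^n" "y < 2^n" "r < 2^n" "c < 2^n"
  shows "(\<Sum>i<4^n. pauli_n n i $$ (r,c) * ((1/2) * ((pauli_n n i * \<rho>) $$ (x,y) + (\<rho> * pauli_n n i) $$ (x,y))))
    = (1/2) * 2^n * ((if c = x then \<rho> $$ (r,y) else 0) + (if r = y then \<rho> $$ (x,c) else 0))"
proof -
  let ?s = "\<lambda>i. pauli_n n i"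
  have A: "(\<Sum>i<4^n. ?s i $$ (r,c) * (?s i * \<rho>) $$ (x,y)) = (if c = x then 2^n * \<rho> $$ (r,y) else 0)"
  proof -
    have "(\<Sum>i<4^n. ?s i $$ (r,c) * (?s i * \<rho>) $$ (x,y)) = (\<Sum>i<4^n. \<Sum>k<2^n. \<rho> $$ (k,y) * (?s i $$ (r,c) * ?s i $$ (x,k)))"
      using lt by (intro sum.cong refl) (simp add: mult_entry[OF pauli_n_carrier rho] sum_distrib_left mult.commute mult.left_commute del: index_mult_mat)
    also have "\<dots> = (\<Sum>k<2^n. \<Sum>i<4^n. \<rho> $$ (k,y) * (?s i $$ (r,c) * ?s i $$ (x,k)))" by (rule sum.swap)
    also have "\<dots> = (\<Sum>k<2^n. if k = r then (if c = x then 2^n * \<rho> $$ (r,y) else 0) else 0)"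
    proof (intro sum.cong refl)
      fix k assume k: "k \<in> {..<(2::nat)^n}"
      have "(\<Sum>i<4^n. \<rho> $$ (k,y) * (?s i $$ (r,c) * ?s i $$ (x,k))) = \<rho> $$ (k,y) * (\<Sum>i<4^n. ?s i $$ (r,c) * ?s i $$ (x,k))"
        by (simp add: sum_distrib_left)
      also have "\<dots> = \<rho> $$ (k,y) * (if r = k \<and> c = x then 2^n else 0)"
        using lt k by (simp add: pauli_complete)
      finally show "(\<Sum>i<4^n. \<rho> $$ (k,y) * (?s i $$ (r,c) * ?s i $$ (x,k))) = (if k = r then (if c = x then 2^n * \<rho> $$ (r,y) else 0) else 0)"
        by auto
    qed
    also have "\<dots> = (if c = x then 2^n * \<rho> $$ (r,y) else 0)" using lt by simp
    finally show ?thesis .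
  qed
  have B: "(\<Sum>i<4^n. ?s i $$ (r,c) * (\<rho> * ?s i) $$ (x,y)) = (if r = y then 2^n * \<rho> $$ (x,c) else 0)"
  proof -
    have "(\<Sum>i<4^n. ?s i $$ (r,c) * (\<rho> * ?s i) $$ (x,y)) = (\<Sum>i<4^n. \<Sum>k<2^n. \<rho> $$ (x,k) * (?s i $$ (r,c) * ?s i $$ (k,y)))"
      using lt by (intro sum.cong refl) (simp add: mult_entry[OF rho pauli_n_carrier] sum_distrib_left mult.commute mult.left_commute del: index_mult_mat)
    also have "\<dots> = (\<Sum>k<2^n. \<Sum>i<4^n. \<rho> $$ (x,k) * (?s i $$ (r,c) * ?s i $$ (k,y)))" by (rule sum.swap)
    also have "\<dots> = (\<Sum>k<2^n. if k = c then (if r = y then 2^n * \<rho> $$ (x,c) else 0) else 0)"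
    proof (intro sum.cong refl)
      fix k assume k: "k \<in> {..<(2::nat)^n}"
      have "(\<Sum>i<4^n. \<rho> $$ (x,k) * (?s i $$ (r,c) * ?s i $$ (k,y))) = \<rho> $$ (x,k) * (\<Sum>i<4^n. ?s i $$ (r,c) * ?s i $$ (k,y))"
        by (simp add: sum_distrib_left)
      also have "\<dots> = \<rho> $$ (x,k) * (if r = y \<and> c = k then 2^n else 0)"
        using lt k by (simp add: pauli_complete)
      finally show "(\<Sum>i<4^n. \<rho> $$ (x,k) * (?s i $$ (r,c) * ?s i $$ (k,y))) = (if k = c then (if r = y then 2^n * \<rho> $$ (x,c) else 0) else 0)"
        by auto
    qed
    also have "\<dots> = (if r = y then 2^n * \<rho> $$ (x,c) else 0)" using lt by simp
    finally show ?thesis .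
  qed
  have "(\<Sum>i<4^n. ?s i $$ (r,c) * ((1/2) * ((?s i * \<rho>) $$ (x,y) + (\<rho> * ?s i) $$ (x,y))))
     = (1/2) * ((\<Sum>i<4^n. ?s i $$ (r,c) * (?s i * \<rho>) $$ (x,y)) + (\<Sum>i<4^n. ?s i $$ (r,c) * (\<rho> * ?s i) $$ (x,y)))"
    by (simp add: sum_distrib_left sum.distrib algebra_simps)
  also have "\<dots> = (1/2) * 2^n * ((if c = x then \<rho> $$ (r,y) else 0) + (if r = y then \<rho> $$ (x,c) else 0))"
    unfolding A B by (simp add: algebra_simps)
  finally show ?thesis .
qed

lemma pdm_entry:
  fixes \<Phi> :: "complex mat \<Rightarrow> complex mat"
  assumes lin: "linear_map_on (2^n) \<Phi>" and rho: "\<rho> \<in> carrier_mat (2^n) (2^n)"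
    and R: "R < 2^n * 2^n" and C: "C < 2^n * 2^n"
  defines "r1 \<equiv> R div 2^n" and "r2 \<equiv> R mod 2^n" and "c1 \<equiv> C div 2^n" and "c2 \<equiv> C mod 2^n"
  shows "pdm n \<rho> \<Phi> $$ (R,C) = (1/2) * ((\<Sum>k<2^n. \<Phi> (ket_bra (2^n) k r1) $$ (r2,c2) * \<rho> $$ (k,c1))
      + (\<Sum>k<2^n. \<rho> $$ (r1,k) * \<Phi> (ket_bra (2^n) c1 k) $$ (r2,c2)))"
proof -
  define F where "F x y q p = \<Phi> (ket_bra (2^n) x y) $$ (q,p)" for x y q p
  define G where "G i x y = (1/2) * ((pauli_n n i * \<rho>) $$ (x,y) + (\<rho> * pauli_n n i) $$ (x,y))" for i x y
  define H where "H i q p = (\<Sum>x<2^n. \<Sum>y<2^n. G i x y * F x y q p)" for i q p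
  have lt: "r1 < 2^n" "r2 < 2^n" "c1 < 2^n" "c2 < 2^n"
    using R C by (auto simp: r1_def r2_def c1_def c2_def less_mult_imp_div_less)
  have corr: "corr n \<rho> \<Phi> i1 i2 = (\<Sum>p<2^n. \<Sum>q<2^n. pauli_n n i2 $$ (p,q) * H i1 q p)" for i1 i2
    unfolding corr_formula[OF lin rho] H_def G_def F_def ..
  have "pdm n \<rho> \<Phi> $$ (R,C) = 1/2^(2*n) * (\<Sum>p\<in>{..<4^n} \<times> {..<4^n}.
      corr n \<rho> \<Phi> (fst p) (snd p) * (pauli_n n (fst p) $$ (r1,c1) * pauli_n n (snd p) $$ (r2,c2)))"
  proof -
    have ke: "(cc \<cdot>\<^sub>m kron (pauli_n n a) (pauli_n n b)) $$ (R,C) = cc * (pauli_n n a $$ (r1,c1) * pauli_n n b $$ (r2,c2))" for cc a b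
    proof -
      have "kron (pauli_n n a) (pauli_n n b) \<in> carrier_mat (2^n*2^n) (2^n*2^n)"
        by (rule kron_carrier[OF pauli_n_carrier pauli_n_carrier])
      then show ?thesis using R C
        by (simp add: index_kron[OF pauli_n_carrier pauli_n_carrier] r1_def r2_def c1_def c2_def)
    qed
    show ?thesis unfolding pdm_def msum_def using R C
      by (auto simp: split_def ke intro!: sum.cong)
  qed
  also have "\<dots> = 1/2^(2*n) * (\<Sum>i1<4^n. \<Sum>i2<4^n.
      corr n \<rho> \<Phi> i1 i2 * (pauli_n n i1 $$ (r1,c1) * pauli_n n i2 $$ (r2,c2)))"
    by (simp add: sum.cartesian_product split_def)
  also have "\<dots> = 1/2^(2*n) * (\<Sum>i1<4^n. pauli_n n i1 $$ (r1,c1) * (2^n * H i1 r2 c2))"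
  proof (intro arg_cong2[where f="(*)"] refl sum.cong)
    fix i1
    have "(\<Sum>i2<4^n. corr n \<rho> \<Phi> i1 i2 * (pauli_n n i1 $$ (r1,c1) * pauli_n n i2 $$ (r2,c2)))
      = pauli_n n i1 $$ (r1,c1) * (\<Sum>i2<4^n. pauli_n n i2 $$ (r2,c2) * (\<Sum>p<2^n. \<Sum>q<2^n. pauli_n n i2 $$ (p,q) * H i1 q p))"
      unfolding corr by (simp add: sum_distrib_left mult.commute mult.left_commute)
    also have "\<dots> = pauli_n n i1 $$ (r1,c1) * (2^n * H i1 r2 c2)"
      using pauli_contract[OF lt(2,4), of "H i1"] by simp
    finally show "(\<Sum>i2<4^n. corr n \<rho> \<Phi> i1 i2 * (pauli_n n i1 $$ (r1,c1) * pauli_n n i2 $$ (r2,c2)))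
      = pauli_n n i1 $$ (r1,c1) * (2^n * H i1 r2 c2)" .
  qed
  also have "\<dots> = 1/2^(2*n) * 2^n * (\<Sum>x<2^n. \<Sum>y<2^n. F x y r2 c2 * (\<Sum>i1<4^n. pauli_n n i1 $$ (r1,c1) * G i1 x y))"
  proof -
    have "(\<Sum>i1<4^n. pauli_n n i1 $$ (r1,c1) * (2^n * H i1 r2 c2)) = 2^n * (\<Sum>i1<4^n. \<Sum>x<2^n. \<Sum>y<2^n. F x y r2 c2 * (pauli_n n i1 $$ (r1,c1) * G i1 x y))"
      unfolding H_def by (simp add: sum_distrib_left mult.commute mult.left_commute)
    also have "(\<Sum>i1<4^n. \<Sum>x<2^n. \<Sum>y<2^n. F x y r2 c2 * (pauli_n n i1 $$ (r1,c1) * G i1 x y))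
       = (\<Sum>x<2^n. \<Sum>i1<4^n. \<Sum>y<2^n. F x y r2 c2 * (pauli_n n i1 $$ (r1,c1) * G i1 x y))"
      by (rule sum.swap)
    also have "\<dots> = (\<Sum>x<2^n. \<Sum>y<2^n. \<Sum>i1<4^n. F x y r2 c2 * (pauli_n n i1 $$ (r1,c1) * G i1 x y))"
      by (rule sum.cong[OF refl], rule sum.swap)
    also have "\<dots> = (\<Sum>x<2^n. \<Sum>y<2^n. F x y r2 c2 * (\<Sum>i1<4^n. pauli_n n i1 $$ (r1,c1) * G i1 x y))"
      by (simp add: sum_distrib_left)
    finally show ?thesis by simp
  qed
  also have "\<dots> = 1/2^(2*n) * 2^n * (\<Sum>x<2^n. \<Sum>y<2^n. F x y r2 c2 *
      ((1/2) * 2^n * ((if c1 = x then \<rho> $$ (r1,y) else 0) + (if r1 = y then \<rho> $$ (x,c1) else 0))))"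
  proof (intro arg_cong2[where f="(*)"] refl sum.cong)
    fix x y assume xy: "x \<in> {..<(2::nat)^n}" "y \<in> {..<(2::nat)^n}"
    show "(\<Sum>i1<4^n. pauli_n n i1 $$ (r1,c1) * G i1 x y) =
      (1/2) * 2^n * ((if c1 = x then \<rho> $$ (r1,y) else 0) + (if r1 = y then \<rho> $$ (x,c1) else 0))"
      unfolding G_def by (rule pauli_G[OF rho]) (use xy lt in auto)
  qed
  also have "\<dots> = 1/2^(2*n) * 2^n * ((1/2) * 2^n) * ((\<Sum>x<2^n. \<Sum>y<2^n. if c1 = x then F x y r2 c2 * \<rho> $$ (r1,y) else 0)
      + (\<Sum>x<2^n. \<Sum>y<2^n. if r1 = y then F x y r2 c2 * \<rho> $$ (x,c1) else 0))"
  proof -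
    let ?k = "(1/2) * 2^n :: complex"
    have pt: "F x y r2 c2 * (?k * ((if c1 = x then \<rho> $$ (r1,y) else 0) + (if r1 = y then \<rho> $$ (x,c1) else 0)))
      = ?k * ((if c1 = x then F x y r2 c2 * \<rho> $$ (r1,y) else 0) + (if r1 = y then F x y r2 c2 * \<rho> $$ (x,c1) else 0))" for x y
      by (simp add: algebra_simps)
    have "(\<Sum>x<2^n. \<Sum>y<2^n. F x y r2 c2 * (?k * ((if c1 = x then \<rho> $$ (r1,y) else 0) + (if r1 = y then \<rho> $$ (x,c1) else 0))))
      = ?k * ((\<Sum>x<2^n. \<Sum>y<2^n. if c1 = x then F x y r2 c2 * \<rho> $$ (r1,y) else 0)
      + (\<Sum>x<2^n. \<Sum>y<2^n. if r1 = y then F x y r2 c2 * \<rho> $$ (x,c1) else 0))"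
      by (simp only: pt sum_distrib_left[symmetric] sum.distrib)
    then show ?thesis by (simp only: mult.assoc)
  qed
  also have "\<dots> = (1/2) * ((\<Sum>y<2^n. F c1 y r2 c2 * \<rho> $$ (r1,y)) + (\<Sum>x<2^n. F x r1 r2 c2 * \<rho> $$ (x,c1)))"
  proof -
    have "(2::complex)^(2*n) = 2^n * 2^n" by (simp add: power_mult_distrib mult_2 power_add)
    then have "1/2^(2*n) * 2^n * ((1/2) * 2^n) = (1/2::complex)" by simp
    moreover have "(\<Sum>x<2^n. \<Sum>y<2^n. if c1 = x then F x y r2 c2 * \<rho> $$ (r1,y) else 0) = (\<Sum>y<2^n. F c1 y r2 c2 * \<rho> $$ (r1,y))"
      using lt by (simp add: sum.swap[of _ "{..<2^n}" "{..<2^n}"])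
    moreover have "(\<Sum>x<2^n. \<Sum>y<2^n. if r1 = y then F x y r2 c2 * \<rho> $$ (x,c1) else 0) = (\<Sum>x<2^n. F x r1 r2 c2 * \<rho> $$ (x,c1))"
      using lt by simp
    ultimately show ?thesis by simp
  qed
  finally show ?thesis unfolding F_def by (simp add: algebra_simps)
qed

lemma choi_carrier: "choi d \<Phi> \<in> carrier_mat (d*d) (d*d)"
  by (simp add: choi_def msum_def)

lemma rhs_entries:
  fixes \<Phi> :: "complex mat \<Rightarrow> complex mat"
  assumes lin: "linear_map_on d \<Phi>" and rho: "\<rho> \<in> carrier_mat d d"
    and R: "R < d * d" and C: "C < d * d"
  shows "(choi d \<Phi> * kron \<rho> (1\<^sub>m d)) $$ (R,C) = (\<Sum>k<d. \<Phi> (ket_bra d k (R div d)) $$ (R mod d, C mod d) * \<rho> $$ (k, C div d))"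
    and "(kron \<rho> (1\<^sub>m d) * choi d \<Phi>) $$ (R,C) = (\<Sum>k<d. \<rho> $$ (R div d, k) * \<Phi> (ket_bra d (C div d) k) $$ (R mod d, C mod d))"
proof -
  have d: "d > 0" using R by (cases d) auto
  have K: "kron \<rho> (1\<^sub>m d) \<in> carrier_mat (d*d) (d*d)" using kron_carrier[OF rho one_carrier_mat] .
  have lt: "R div d < d" "C div d < d" "R mod d < d" "C mod d < d" using R C d by (auto simp: less_mult_imp_div_less)
  have idx: "k1 * d + k2 < d * d" if "k1 < d" "k2 < d" for k1 k2
  proof -
    have "k1 * d + k2 < k1 * d + d" using that by simp
    also have "\<dots> = Suc k1 * d" by simp
    also have "\<dots> \<le> d * d" by (rule mult_le_mono1) (use that in simp)
    finally show ?thesis .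
  qed
  have dv: "(k1 * d + k2) div d = k1" "(k1 * d + k2) mod d = k2" if "k2 < d" for k1 k2
    using that by auto
  have "(choi d \<Phi> * kron \<rho> (1\<^sub>m d)) $$ (R,C) = (\<Sum>j<d*d. choi d \<Phi> $$ (R,j) * kron \<rho> (1\<^sub>m d) $$ (j,C))"
    by (rule mult_entry[OF choi_carrier K R C])
  also have "\<dots> = (\<Sum>k1<d. \<Sum>k2<d. choi d \<Phi> $$ (R,k1*d+k2) * kron \<rho> (1\<^sub>m d) $$ (k1*d+k2,C))"
    by (rule sum_split_mult)
  also have "\<dots> = (\<Sum>k1<d. \<Sum>k2<d. if k2 = C mod d then \<Phi> (ket_bra d k1 (R div d)) $$ (R mod d, C mod d) * \<rho> $$ (k1, C div d) else 0)"
    by (intro sum.cong refl) (simp add: choi_entry[OF lin R idx] kron_id_entry[OF rho idx C] dv)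
  also have "\<dots> = (\<Sum>k<d. \<Phi> (ket_bra d k (R div d)) $$ (R mod d, C mod d) * \<rho> $$ (k, C div d))"
    using lt by simp
  finally show "(choi d \<Phi> * kron \<rho> (1\<^sub>m d)) $$ (R,C) = (\<Sum>k<d. \<Phi> (ket_bra d k (R div d)) $$ (R mod d, C mod d) * \<rho> $$ (k, C div d))" .
  have "(kron \<rho> (1\<^sub>m d) * choi d \<Phi>) $$ (R,C) = (\<Sum>j<d*d. kron \<rho> (1\<^sub>m d) $$ (R,j) * choi d \<Phi> $$ (j,C))"
    by (rule mult_entry[OF K choi_carrier R C])
  also have "\<dots> = (\<Sum>k1<d. \<Sum>k2<d. kron \<rho> (1\<^sub>m d) $$ (R,k1*d+k2) * choi d \<Phi> $$ (k1*d+k2,C))"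
    by (rule sum_split_mult)
  also have "\<dots> = (\<Sum>k1<d. \<Sum>k2<d. if k2 = R mod d then \<rho> $$ (R div d, k1) * \<Phi> (ket_bra d (C div d) k1) $$ (R mod d, C mod d) else 0)"
    by (intro sum.cong refl) (auto simp: choi_entry[OF lin idx C] kron_id_entry[OF rho R idx] dv)
  also have "\<dots> = (\<Sum>k<d. \<rho> $$ (R div d, k) * \<Phi> (ket_bra d (C div d) k) $$ (R mod d, C mod d))"
    using lt by simp
  finally show "(kron \<rho> (1\<^sub>m d) * choi d \<Phi>) $$ (R,C) = (\<Sum>k<d. \<rho> $$ (R div d, k) * \<Phi> (ket_bra d (C div d) k) $$ (R mod d, C mod d))" .
qed

theorem theorem1:
  fixes n :: nat and \<rho>1 :: "complex mat" and \<Phi> :: "complex mat \<Rightarrow> complex mat"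
  assumes "n \<ge> 1"
    and "density_matrix (2^n) \<rho>1"
    and "CPTP (2^n) \<Phi>"
  shows "pdm n \<rho>1 \<Phi> =
     (1/2 :: complex) \<cdot>\<^sub>m (choi (2^n) \<Phi> * kron \<rho>1 (1\<^sub>m (2^n)) + kron \<rho>1 (1\<^sub>m (2^n)) * choi (2^n) \<Phi>)"
proof -
  have rho: "\<rho>1 \<in> carrier_mat (2^n) (2^n)" using assms(2) by (simp add: density_matrix_def psd_def)
  have lin: "linear_map_on (2^n) \<Phi>" using assms(3) by (simp add: CPTP_def)
  have K: "kron \<rho>1 (1\<^sub>m (2^n)) \<in> carrier_mat (2^n*2^n) (2^n*2^n)" using kron_carrier[OF rho one_carrier_mat] .
  have Ch: "choi (2^n) \<Phi> \<in> carrier_mat (2^n*2^n) (2^n*2^n)" by (rule choi_carrier)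
  have dimL: "dim_row (pdm n \<rho>1 \<Phi>) = 2^n*2^n" "dim_col (pdm n \<rho>1 \<Phi>) = 2^n*2^n"
    by (simp_all add: pdm_def msum_def)
  show ?thesis
  proof (rule eq_matI)
    show "dim_row (pdm n \<rho>1 \<Phi>) = dim_row ((1/2 :: complex) \<cdot>\<^sub>m (choi (2^n) \<Phi> * kron \<rho>1 (1\<^sub>m (2^n)) + kron \<rho>1 (1\<^sub>m (2^n)) * choi (2^n) \<Phi>))"
      using K Ch dimL by simp
    show "dim_col (pdm n \<rho>1 \<Phi>) = dim_col ((1/2 :: complex) \<cdot>\<^sub>m (choi (2^n) \<Phi> * kron \<rho>1 (1\<^sub>m (2^n)) + kron \<rho>1 (1\<^sub>m (2^n)) * choi (2^n) \<Phi>))"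
      using K Ch dimL by simp
    fix R C
    assume "R < dim_row ((1/2 :: complex) \<cdot>\<^sub>m (choi (2^n) \<Phi> * kron \<rho>1 (1\<^sub>m (2^n)) + kron \<rho>1 (1\<^sub>m (2^n)) * choi (2^n) \<Phi>))"
      and "C < dim_col ((1/2 :: complex) \<cdot>\<^sub>m (choi (2^n) \<Phi> * kron \<rho>1 (1\<^sub>m (2^n)) + kron \<rho>1 (1\<^sub>m (2^n)) * choi (2^n) \<Phi>))"
    then have R: "R < 2^n*2^n" and C: "C < 2^n*2^n" using K Ch by auto
    have "((1/2 :: complex) \<cdot>\<^sub>m (choi (2^n) \<Phi> * kron \<rho>1 (1\<^sub>m (2^n)) + kron \<rho>1 (1\<^sub>m (2^n)) * choi (2^n) \<Phi>)) $$ (R,C)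
      = (1/2) * ((choi (2^n) \<Phi> * kron \<rho>1 (1\<^sub>m (2^n))) $$ (R,C) + (kron \<rho>1 (1\<^sub>m (2^n)) * choi (2^n) \<Phi>) $$ (R,C))"
      using K Ch R C by simp
    also have "\<dots> = pdm n \<rho>1 \<Phi> $$ (R,C)"
      unfolding rhs_entries[OF lin rho R C] pdm_entry[OF lin rho R C] ..
    finally show "pdm n \<rho>1 \<Phi> $$ (R,C) = ((1/2 :: complex) \<cdot>\<^sub>m (choi (2^n) \<Phi> * kron \<rho>1 (1\<^sub>m (2^n)) + kron \<rho>1 (1\<^sub>m (2^n)) * choi (2^n) \<Phi>)) $$ (R,C)"
      by simp
  qed
qed

end
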